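(* Let $l\geq 2$ be an integer and let $n=\binom{2l+1}{l}+1$. Then $\chi'_{D_2}(\overleftrightarrow{K_n})<\chi'_{D_{1,2}}(\overleftrightarrow{K_n})$.
   Context: For a simple graph $G$, the symmetric digraph $\overleftrightarrow{G}$ is obtained by replacing each edge $uv$ of $G$ by the pair of opposite arcs $\overrightarrow{uv}$ and $\overrightarrow{vu}$; $K_n$ is the complete graph on $n$ vertices. A monochromatic 2-path is a pair of arcs $\overrightarrow{uv},\overrightarrow{vw}$ with $w\neq u$ of the same colour; a monochromatic 2-cycle is a pair $\overrightarrow{uv},\overrightarrow{vu}$ of the same colour. An arc-colouring is distinguishing if the only automorphism of $\overleftrightarrow{G}$ preserving the colour of every arc is the identity. $\chi'_{D_{1,2}}(\overleftrightarrow{G})$ is the least number of colours in a distinguishing arc-colouring with no monochromatic 2-cycles and no monochromatic 2-paths; $\chi'_{D_2}(\overleftrightarrow{G})$ is the least number of colours in a distinguishing arc-colouring with no monochromatic 2-paths. *)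

theory Defs
  imports Main
begin

text \<open>A simple graph is given by a vertex set V and a symmetric irreflexive
adjacency relation E. The symmetric digraph has arcs (u,v) for every edge uv.\<close>

definition sym_arcs :: "'a set \<Rightarrow> ('a \<Rightarrow> 'a \<Rightarrow> bool) \<Rightarrow> ('a \<times> 'a) set" where
  "sym_arcs V E = {(u, v). u \<in> V \<and> v \<in> V \<and> E u v}"

definition digraph_aut :: "'a set \<Rightarrow> ('a \<Rightarrow> 'a \<Rightarrow> bool) \<Rightarrow> ('a \<Rightarrow> 'a) \<Rightarrow> bool" where
  "digraph_aut V E \<sigma> \<longleftrightarrow> bij_betw \<sigma> V V \<and>
     (\<forall>u\<in>V. \<forall>v\<in>V. (u, v) \<in> sym_arcs V E \<longleftrightarrow> (\<sigma> u, \<sigma> v) \<in> sym_arcs V E)"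

definition arc_colouring :: "'a set \<Rightarrow> ('a \<Rightarrow> 'a \<Rightarrow> bool) \<Rightarrow> nat \<Rightarrow> ('a \<times> 'a \<Rightarrow> nat) \<Rightarrow> bool" where
  "arc_colouring V E k c \<longleftrightarrow> (\<forall>a\<in>sym_arcs V E. c a < k)"

definition distinguishing :: "'a set \<Rightarrow> ('a \<Rightarrow> 'a \<Rightarrow> bool) \<Rightarrow> ('a \<times> 'a \<Rightarrow> nat) \<Rightarrow> bool" where
  "distinguishing V E c \<longleftrightarrow>
     (\<forall>\<sigma>. digraph_aut V E \<sigma> \<and> (\<forall>(u, v)\<in>sym_arcs V E. c (\<sigma> u, \<sigma> v) = c (u, v))
        \<longrightarrow> (\<forall>v\<in>V. \<sigma> v = v))"

definition no_mono_2path :: "'a set \<Rightarrow> ('a \<Rightarrow> 'a \<Rightarrow> bool) \<Rightarrow> ('a \<times> 'a \<Rightarrow> nat) \<Rightarrow> bool" where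
  "no_mono_2path V E c \<longleftrightarrow>
     (\<forall>u v w. (u, v) \<in> sym_arcs V E \<and> (v, w) \<in> sym_arcs V E \<and> w \<noteq> u \<longrightarrow> c (u, v) \<noteq> c (v, w))"

definition no_mono_2cycle :: "'a set \<Rightarrow> ('a \<Rightarrow> 'a \<Rightarrow> bool) \<Rightarrow> ('a \<times> 'a \<Rightarrow> nat) \<Rightarrow> bool" where
  "no_mono_2cycle V E c \<longleftrightarrow> (\<forall>(u, v)\<in>sym_arcs V E. c (u, v) \<noteq> c (v, u))"

definition chi_D2 :: "'a set \<Rightarrow> ('a \<Rightarrow> 'a \<Rightarrow> bool) \<Rightarrow> nat" where
  "chi_D2 V E = (LEAST k. \<exists>c. arc_colouring V E k c \<and> distinguishing V E c \<and> no_mono_2path V E c)"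

definition chi_D12 :: "'a set \<Rightarrow> ('a \<Rightarrow> 'a \<Rightarrow> bool) \<Rightarrow> nat" where
  "chi_D12 V E = (LEAST k. \<exists>c. arc_colouring V E k c \<and> distinguishing V E c
       \<and> no_mono_2path V E c \<and> no_mono_2cycle V E c)"

definition K_V :: "nat \<Rightarrow> nat set" where "K_V n = {..<n}"
definition K_E :: "nat \<Rightarrow> nat \<Rightarrow> bool" where "K_E u v \<longleftrightarrow> u \<noteq> v"

end

theory Submission
  imports Defs "HOL.Binomial_Plus"
begin


lemma lym:
  assumes "finite X" "F \<subseteq> Pow X" "\<forall>A\<in>F. \<forall>B\<in>F. A \<subseteq> B \<longrightarrow> A = B"
  shows "(\<Sum>A\<in>F. fact (card A) * fact (card X - card A)) \<le> (fact (card X) :: nat)"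
  using assms
proof (induction "card X" arbitrary: X F)
  case 0
  then have "X = {}" by simp
  then have "F \<subseteq> {{}}" using 0 by auto
  then have "F = {} \<or> F = {{}}" by blast
  then show ?case using \<open>X = {}\<close> by auto
next
  case (Suc m X F)
  have finF: "finite F" using Suc.prems finite_subset by (metis finite_Pow_iff)
  show ?case
  proof (cases "X \<in> F")
    case True
    have "F = {X}" using True Suc.prems by blast
    then show ?thesis by simp
  next
    case False
    define g :: "'a set \<Rightarrow> nat" where "g A = fact (card A) * fact (m - card A)" for A
    have cA: "card A \<le> m" if "A \<in> F" for A
    proof -
      have "A \<subset> X" using that False Suc.prems by blast
      then have "card A < card X" using Suc.prems(1) psubset_card_mono by blast
      then show ?thesis using Suc.hyps(2) by simp
    qed
    have eq: "fact (card A) * fact (card X - card A) = (\<Sum>x\<in>X. if x \<notin> A then g A else 0)"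
      if "A \<in> F" for A
    proof -
      have AX: "A \<subseteq> X" using that Suc.prems by blast
      have "(\<Sum>x\<in>X. if x \<notin> A then g A else 0) = (\<Sum>x\<in>X - A. g A)"
        using Suc.prems(1) by (simp add: sum.If_cases Diff_eq Compl_eq)
      also have "\<dots> = card (X - A) * g A" by simp
      also have "card (X - A) = Suc m - card A"
        using AX Suc.prems(1) Suc.hyps(2) by (simp add: card_Diff_subset finite_subset)
      also have "Suc m - card A = Suc (m - card A)" using cA[OF that] by simp
      finally have "(\<Sum>x\<in>X. if x \<notin> A then g A else 0) = Suc (m - card A) * g A" .
      moreover have "card X - card A = Suc (m - card A)" using cA[OF that] Suc.hyps(2) by simp
      ultimately show ?thesis by (simp add: g_def algebra_simps)
    qed
    have "(\<Sum>A\<in>F. fact (card A) * fact (card X - card A))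
        = (\<Sum>A\<in>F. \<Sum>x\<in>X. if x \<notin> A then g A else 0)"
      using eq by (rule sum.cong[OF refl])
    also have "\<dots> = (\<Sum>x\<in>X. \<Sum>A\<in>F. if x \<notin> A then g A else 0)"
      by (rule sum.swap)
    also have "\<dots> = (\<Sum>x\<in>X. \<Sum>A\<in>{A\<in>F. x \<notin> A}. g A)"
      using finF by (simp add: sum.inter_filter)
    also have "\<dots> \<le> (\<Sum>x\<in>X. fact m)"
    proof (rule sum_mono)
      fix x assume x: "x \<in> X"
      have cX: "m = card (X - {x})" using x Suc.hyps(2) Suc.prems(1) by simp
      have "(\<Sum>A\<in>{A\<in>F. x \<notin> A}. fact (card A) * fact (card (X - {x}) - card A)) \<le> (fact (card (X - {x})) :: nat)"
      proof -
        have p1: "finite (X - {x})" using Suc.prems by simp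
        have p2: "{A\<in>F. x \<notin> A} \<subseteq> Pow (X - {x})" using Suc.prems by auto
        have p3: "\<forall>A\<in>{A\<in>F. x \<notin> A}. \<forall>B\<in>{A\<in>F. x \<notin> A}. A \<subseteq> B \<longrightarrow> A = B" using Suc.prems by auto
        show ?thesis using Suc.hyps(1)[OF cX p1 p2 p3] .
      qed
      then show "(\<Sum>A\<in>{A\<in>F. x \<notin> A}. g A) \<le> fact m"
        unfolding g_def using cX by simp
    qed
    also have "\<dots> = fact (card X)" using Suc.hyps(2)[symmetric] by simp
    finally show ?thesis .
  qed
qed

lemma sperner:
  assumes "finite X" "F \<subseteq> Pow X" "\<forall>A\<in>F. \<forall>B\<in>F. A \<subseteq> B \<longrightarrow> A = B"
  shows "card F \<le> card X choose (card X div 2)"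
proof -
  define N where "N = card X"
  define h where "h = N div 2"
  have finF: "finite F" using assms finite_subset by (metis finite_Pow_iff)
  have le: "fact h * fact (N - h) \<le> (fact (card A) * fact (N - card A) :: nat)" if "A \<in> F" for A :: "'a set"
  proof -
    have k: "card A \<le> N" using that assms N_def by (meson PowD card_mono subsetD)
    have e1: "fact (card A) * fact (N - card A) * (N choose card A) = (fact N :: nat)"
      using binomial_fact_lemma[OF k] .
    have e2: "fact h * fact (N - h) * (N choose h) = (fact N :: nat)"
      using binomial_fact_lemma[of h N] h_def by simp
    have b: "N choose card A \<le> N choose h" unfolding h_def by (rule binomial_maximum)
    have pos: "N choose h > 0" unfolding h_def by simp
    have "fact h * fact (N - h) * (N choose h) \<le> fact (card A) * fact (N - card A) * (N choose h)"
      using e1 e2 b by (metis mult_le_mono2)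
    then show ?thesis using pos by simp
  qed
  have "card F * (fact h * fact (N - h)) = (\<Sum>A\<in>F. fact h * fact (N - h))" by simp
  also have "\<dots> \<le> (\<Sum>A\<in>F. fact (card A) * fact (N - card A))" by (rule sum_mono) (rule le)
  also have "\<dots> \<le> fact N" unfolding N_def by (rule lym[OF assms])
  also have "\<dots> = (N choose h) * (fact h * fact (N - h))"
    using binomial_fact_lemma[of h N] h_def by (simp add: mult_ac)
  finally have "card F * (fact h * fact (N - h)) \<le> (N choose h) * (fact h * fact (N - h))" .
  then have "card F \<le> N choose h" by (simp add: fact_gt_zero)
  then show ?thesis unfolding N_def h_def .
qed



definition Ls :: "nat \<Rightarrow> nat set set" where "Ls l = {L. L \<subseteq> {..<2*l} \<and> card L = l}"
definition cmp :: "nat \<Rightarrow> nat set \<Rightarrow> nat set" where "cmp l L = {..<2*l} - L"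
definition Vt :: "nat \<Rightarrow> nat set set \<Rightarrow> (nat set \<times> bool) set" where
  "Vt l D = {(L, b). L \<in> Ls l \<and> (b \<longrightarrow> L \<notin> D)}"
definition col :: "nat \<Rightarrow> nat set \<times> bool \<Rightarrow> nat set \<times> bool \<Rightarrow> nat" where
  "col l x y = (if fst x = fst y then 2*l
     else if fst y = cmp l (fst x) \<and> \<not> snd x \<and> snd y then Max (fst x) else Min (fst x - fst y))"

lemma Ls_fin: "L \<in> Ls l \<Longrightarrow> finite L"
  using finite_subset[of L "{..<2*l}"] by (simp add: Ls_def)

lemma cmp_Ls: assumes "L \<in> Ls l" shows "cmp l L \<in> Ls l"
proof -
  have a: "L \<subseteq> {..<2*l}" "card L = l" using assms unfolding Ls_def by auto
  have "finite L" using a finite_subset[of L "{..<2*l}"] by simp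
  then have "card ({..<2*l} - L) = 2*l - l" using card_Diff_subset[OF _ a(1)] a(2) by simp
  then show ?thesis unfolding Ls_def cmp_def by simp
qed

lemma cmp_cmp: "L \<in> Ls l \<Longrightarrow> cmp l (cmp l L) = L"
  unfolding Ls_def cmp_def by blast

lemma Ls_diff: "L \<in> Ls l \<Longrightarrow> M \<in> Ls l \<Longrightarrow> L \<noteq> M \<Longrightarrow> L - M \<noteq> {}"
proof
  assume a: "L \<in> Ls l" "M \<in> Ls l" "L \<noteq> M" "L - M = {}"
  then have "L \<subseteq> M" by blast
  moreover have "finite M" using a(2) by (rule Ls_fin)
  moreover have "card L = card M" using a(1,2) unfolding Ls_def by simp
  ultimately show False using a(3) card_subset_eq by blast
qed

lemma Min_ne_Max: assumes "L \<in> Ls l" "l \<ge> 2" shows "Min L \<noteq> Max L"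
proof
  assume e: "Min L = Max L"
  have f: "finite L" using assms Ls_fin by blast
  have ne: "L \<noteq> {}" using assms unfolding Ls_def by auto
  have "L \<subseteq> {Min L}"
  proof
    fix x assume "x \<in> L"
    then have "Min L \<le> x" "x \<le> Max L" using f by auto
    then show "x \<in> {Min L}" using e by simp
  qed
  then have "card L \<le> card {Min L}" using card_mono[of "{Min L}" L] by simp
  then have "card L \<le> 1" by simp
  then show False using assms unfolding Ls_def by simp
qed

lemma col_in:
  assumes "x \<in> Vt l D" "y \<in> Vt l D" "fst x \<noteq> fst y" "l \<ge> 2"
  shows "col l x y \<in> fst x - fst y"
proof -
  have L: "fst x \<in> Ls l" "fst y \<in> Ls l" using assms unfolding Vt_def by auto
  show ?thesis
  proof (cases "fst y = cmp l (fst x) \<and> \<not> snd x \<and> snd y")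
    case True
    have "fst x \<noteq> {}" using L assms(4) unfolding Ls_def by auto
    then have "Max (fst x) \<in> fst x" using Ls_fin[OF L(1)] by simp
    moreover have "Max (fst x) \<notin> fst y" using True calculation unfolding cmp_def by auto
    ultimately show ?thesis using True assms(3) unfolding col_def by simp
  next
    case False
    have "fst x - fst y \<noteq> {}" using Ls_diff L assms(3) by blast
    moreover have "finite (fst x - fst y)" using Ls_fin[OF L(1)] by simp
    ultimately have "Min (fst x - fst y) \<in> fst x - fst y" using Min_in by blast
    then show ?thesis using False assms(3) unfolding col_def by auto
  qed
qed

lemma col_lt:
  assumes "x \<in> Vt l D" "y \<in> Vt l D" "l \<ge> 2"
  shows "col l x y < 2*l+1"
proof (cases "fst x = fst y")
  case True then show ?thesis unfolding col_def by simp
next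
  case False
  then have "col l x y \<in> fst x" using col_in assms by blast
  moreover have "fst x \<subseteq> {..<2*l}" using assms unfolding Vt_def Ls_def by auto
  ultimately show ?thesis by auto
qed

lemma col_small:
  assumes "x \<in> Vt l D" "y \<in> Vt l D" "l \<ge> 2" "fst x \<noteq> fst y"
  shows "col l x y < 2*l"
proof -
  have "col l x y \<in> fst x" using col_in assms by blast
  moreover have "fst x \<subseteq> {..<2*l}" using assms unfolding Vt_def Ls_def by auto
  ultimately show ?thesis by auto
qed

lemma col_path:
  assumes "x \<in> Vt l D" "y \<in> Vt l D" "z \<in> Vt l D" "l \<ge> 2" "x \<noteq> y" "y \<noteq> z" "z \<noteq> x"
  shows "col l x y \<noteq> col l y z"
proof (cases "fst x = fst y")
  case True
  then have c1: "col l x y = 2*l" unfolding col_def by simp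
  show ?thesis
  proof (cases "fst y = fst z")
    case True
    have "snd x \<noteq> snd y" using \<open>fst x = fst y\<close> assms(5) prod_eqI by blast
    moreover have "snd y \<noteq> snd z" using \<open>fst y = fst z\<close> assms(6) prod_eqI by blast
    moreover have "snd z \<noteq> snd x"
    proof -
      have "fst z = fst x" using \<open>fst x = fst y\<close> \<open>fst y = fst z\<close> by simp
      then show ?thesis using assms(7) prod_eqI by blast
    qed
    ultimately have False by blast
    then show ?thesis ..
  next
    case False
    then show ?thesis using c1 col_small[OF assms(2,3,4) False] by simp
  qed
next
  case False
  have a: "col l x y \<notin> fst y" using col_in[OF assms(1,2) False assms(4)] by blast
  show ?thesis
  proof (cases "fst y = fst z")
    case True
    then show ?thesis using col_small[OF assms(1,2,4) False] unfolding col_def by auto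
  next
    case False
    then show ?thesis using a col_in[OF assms(2,3) False assms(4)] by auto
  qed
qed


definition OC :: "nat \<Rightarrow> nat set set \<Rightarrow> nat set \<times> bool \<Rightarrow> nat set" where
  "OC l D x = (\<lambda>y. col l x y) ` (Vt l D - {x})"

lemma OC_eq:
  assumes "x \<in> Vt l D" "l \<ge> 2"
  shows "OC l D x - {2*l} = fst x"
proof
  show "OC l D x - {2*l} \<subseteq> fst x"
  proof
    fix i assume "i \<in> OC l D x - {2*l}"
    then obtain y where y: "y \<in> Vt l D" "y \<noteq> x" "i = col l x y" "i \<noteq> 2*l" unfolding OC_def by auto
    then have "fst x \<noteq> fst y" unfolding col_def by auto
    then show "i \<in> fst x" using col_in[OF assms(1) y(1) _ assms(2)] y(3) by blast
  qed
next
  show "fst x \<subseteq> OC l D x - {2*l}"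
  proof
    fix i assume i: "i \<in> fst x"
    have Lx: "fst x \<in> Ls l" using assms unfolding Vt_def by auto
    have sub: "fst x \<subseteq> {..<2*l}" and cx: "card (fst x) = l" using Lx unfolding Ls_def by auto
    have fx: "finite (fst x)" using Lx by (rule Ls_fin)
    have "card (cmp l (fst x)) = l" using cmp_Ls[OF Lx] unfolding Ls_def by simp
    then have "cmp l (fst x) \<noteq> {}" using assms(2) by auto
    then obtain j where j: "j \<in> cmp l (fst x)" by blast
    then have j1: "j < 2*l" "j \<notin> fst x" unfolding cmp_def by auto
    define M where "M = insert j (fst x - {i})"
    have "card (fst x - {i}) = l - 1" using i fx cx by simp
    then have cM: "card M = l" unfolding M_def using j1 fx assms(2) by simp
    have "M \<subseteq> {..<2*l}" unfolding M_def using sub j1 by auto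
    then have MLs: "M \<in> Ls l" using cM unfolding Ls_def by simp
    define y where "y = (M, False)"
    have yV: "y \<in> Vt l D" unfolding y_def Vt_def using MLs by simp
    have neq: "fst x \<noteq> M" unfolding M_def using j1 by auto
    have d: "fst x - M = {i}" unfolding M_def using i j1 by auto
    have "col l x y = i" unfolding col_def y_def using neq d by auto
    moreover have "y \<noteq> x" using neq y_def by auto
    ultimately have "i \<in> OC l D x" unfolding OC_def using yV by force
    moreover have "i \<noteq> 2*l" using i sub by auto
    ultimately show "i \<in> OC l D x - {2*l}" by simp
  qed
qed

lemma OC_inv:
  assumes bij: "bij_betw \<tau> (Vt l D) (Vt l D)"
    and pres: "\<forall>x\<in>Vt l D. \<forall>y\<in>Vt l D. x \<noteq> y \<longrightarrow> col l (\<tau> x) (\<tau> y) = col l x y"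
    and x: "x \<in> Vt l D"
  shows "OC l D (\<tau> x) = OC l D x"
proof -
  have inj: "inj_on \<tau> (Vt l D)" using bij_betw_imp_inj_on[OF bij] .
  have "\<tau> ` (Vt l D - {x}) = \<tau> ` Vt l D - \<tau> ` {x}"
    by (rule inj_on_image_set_diff[OF inj]) (use x in auto)
  also have "\<dots> = Vt l D - {\<tau> x}" using bij_betw_imp_surj_on[OF bij] by simp
  finally have im: "\<tau> ` (Vt l D - {x}) = Vt l D - {\<tau> x}" .
  have "OC l D (\<tau> x) = (\<lambda>y. col l (\<tau> x) y) ` (\<tau> ` (Vt l D - {x}))"
    unfolding OC_def im ..
  also have "\<dots> = (\<lambda>y. col l (\<tau> x) (\<tau> y)) ` (Vt l D - {x})" by (simp add: image_image)
  also have "\<dots> = (\<lambda>y. col l x y) ` (Vt l D - {x})"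
  proof (rule image_cong[OF refl])
    fix y assume "y \<in> Vt l D - {x}"
    then have y: "y \<in> Vt l D" "x \<noteq> y" by auto
    show "col l (\<tau> x) (\<tau> y) = col l x y" using pres x y by simp
  qed
  finally show ?thesis unfolding OC_def .
qed

lemma fst_inv:
  assumes bij: "bij_betw \<tau> (Vt l D) (Vt l D)"
    and pres: "\<forall>x\<in>Vt l D. \<forall>y\<in>Vt l D. x \<noteq> y \<longrightarrow> col l (\<tau> x) (\<tau> y) = col l x y"
    and x: "x \<in> Vt l D" and l: "l \<ge> 2"
  shows "fst (\<tau> x) = fst x"
proof -
  have tx: "\<tau> x \<in> Vt l D" using bij_betw_apply[OF bij x] .
  have "fst (\<tau> x) = OC l D (\<tau> x) - {2*l}" using OC_eq[OF tx l] by simp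
  also have "\<dots> = OC l D x - {2*l}" using OC_inv[OF bij pres x] by simp
  also have "\<dots> = fst x" using OC_eq[OF x l] .
  finally show ?thesis .
qed

lemma distinguish_Vt:
  assumes bij: "bij_betw \<tau> (Vt l D) (Vt l D)"
    and pres: "\<forall>x\<in>Vt l D. \<forall>y\<in>Vt l D. x \<noteq> y \<longrightarrow> col l (\<tau> x) (\<tau> y) = col l x y"
    and l: "l \<ge> 2"
  shows "\<forall>x\<in>Vt l D. \<tau> x = x"
proof -
  have inj: "inj_on \<tau> (Vt l D)" using bij_betw_imp_inj_on[OF bij] .
  have inV: "\<tau> x \<in> Vt l D" if "x \<in> Vt l D" for x using bij_betw_apply[OF bij that] .
  have ff: "fst (\<tau> x) = fst x" if "x \<in> Vt l D" for x using fst_inv[OF bij pres that l] .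
  have ufix: "\<tau> (L, False) = (L, False)" if u: "(L, False) \<in> Vt l D" for L
  proof (rule ccontr)
    assume ne: "\<tau> (L, False) \<noteq> (L, False)"
    have LL: "L \<in> Ls l" using u unfolding Vt_def by auto
    have tu: "\<tau> (L, False) = (L, True)" using ff[OF u] ne by (metis prod.collapse fst_conv)
    then have vV: "(L, True) \<in> Vt l D" using inV[OF u] by simp
    define L' where "L' = cmp l L"
    have L'L: "L' \<in> Ls l" unfolding L'_def using cmp_Ls[OF LL] .
    have cc: "cmp l L' = L" unfolding L'_def using cmp_cmp[OF LL] .
    have neL: "L \<noteq> {}" using LL l unfolding Ls_def by auto
    have diff: "L' \<noteq> L" unfolding L'_def cmp_def using neL LL unfolding Ls_def by auto
    have d1: "L' - L = L'" unfolding L'_def cmp_def by auto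
    have d2: "L - L' = L" unfolding L'_def cmp_def by auto
    have u'V: "(L', False) \<in> Vt l D" unfolding Vt_def using L'L by simp
    show False
    proof (cases "\<tau> (L', False) = (L', False)")
      case True
      have "col l (\<tau> (L', False)) (\<tau> (L, False)) = col l (L', False) (L, False)"
        using pres u'V u diff by auto
      then have "Max L' = Min L'" using True tu diff cc d1 unfolding col_def by auto
      then show False using Min_ne_Max[OF L'L l] by simp
    next
      case False
      have tu': "\<tau> (L', False) = (L', True)" using ff[OF u'V] False by (metis prod.collapse fst_conv)
      then have v'V: "(L', True) \<in> Vt l D" using inV[OF u'V] by simp
      have "\<tau> (L', True) \<noteq> \<tau> (L', False)" using inj v'V u'V inj_on_eq_iff by fastforce
      then have tv': "\<tau> (L', True) = (L', False)" using ff[OF v'V] tu' by (metis prod.collapse fst_conv)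
      have "col l (\<tau> (L, False)) (\<tau> (L', True)) = col l (L, False) (L', True)"
        using pres u v'V diff by auto
      then have "Min L = Max L" using tu tv' diff d2 unfolding col_def L'_def by auto
      then show False using Min_ne_Max[OF LL l] by simp
    qed
  qed
  show ?thesis
  proof
    fix x assume x: "x \<in> Vt l D"
    obtain L b where xe: "x = (L, b)" by (cases x)
    show "\<tau> x = x"
    proof (cases b)
      case False then show ?thesis using ufix x xe by simp
    next
      case True
      have uV: "(L, False) \<in> Vt l D" using x xe unfolding Vt_def by auto
      have "\<tau> (L, True) \<noteq> \<tau> (L, False)" using inj uV x xe True inj_on_eq_iff by fastforce
      then show ?thesis using ufix[OF uV] ff[OF x] xe True by (metis prod.collapse fst_conv)
    qed
  qed
qed



lemma arcsK: "(u, v) \<in> sym_arcs (K_V n) K_E \<longleftrightarrow> u < n \<and> v < n \<and> u \<noteq> v"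
  by (simp add: sym_arcs_def K_V_def K_E_def)

lemma transfer:
  fixes V :: "'a set" and col :: "'a \<Rightarrow> 'a \<Rightarrow> nat"
  assumes fin: "finite V" and cV: "card V = n"
    and P1: "\<forall>x\<in>V. \<forall>y\<in>V. x \<noteq> y \<longrightarrow> col x y < k"
    and P2: "\<forall>x\<in>V. \<forall>y\<in>V. \<forall>z\<in>V. x \<noteq> y \<and> y \<noteq> z \<and> z \<noteq> x \<longrightarrow> col x y \<noteq> col y z"
    and P3: "\<forall>\<tau>. bij_betw \<tau> V V \<and> (\<forall>x\<in>V. \<forall>y\<in>V. x \<noteq> y \<longrightarrow> col (\<tau> x) (\<tau> y) = col x y)
               \<longrightarrow> (\<forall>x\<in>V. \<tau> x = x)"
  shows "\<exists>c. arc_colouring (K_V n) K_E k c \<and> distinguishing (K_V n) K_E c \<and> no_mono_2path (K_V n) K_E c"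
proof -
  obtain f where f0: "bij_betw f {0..<card V} V" using ex_bij_betw_nat_finite[OF fin] by blast
  have f: "bij_betw f {..<n} V" using f0 cV by (simp add: atLeast0LessThan)
  have inj: "inj_on f {..<n}" using bij_betw_imp_inj_on[OF f] .
  have fV: "f a \<in> V" if "a < n" for a using bij_betw_apply[OF f] that by simp
  have fne: "f a \<noteq> f b" if "a < n" "b < n" "a \<noteq> b" for a b
    using inj that by (simp add: inj_on_eq_iff)
  define c where "c = (\<lambda>(a, b). col (f a) (f b))"
  have ac: "arc_colouring (K_V n) K_E k c"
    unfolding arc_colouring_def
  proof
    fix e assume "e \<in> sym_arcs (K_V n) K_E"
    then obtain a b where e: "e = (a, b)" "a < n" "b < n" "a \<noteq> b" using arcsK by (cases e) blast
    show "c e < k" using P1 fV[OF e(2)] fV[OF e(3)] fne[OF e(2-4)] e(1) unfolding c_def by simp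
  qed
  have np: "no_mono_2path (K_V n) K_E c"
    unfolding no_mono_2path_def
  proof (intro allI impI)
    fix u v w assume "(u, v) \<in> sym_arcs (K_V n) K_E \<and> (v, w) \<in> sym_arcs (K_V n) K_E \<and> w \<noteq> u"
    then have h: "u < n" "v < n" "w < n" "u \<noteq> v" "v \<noteq> w" "w \<noteq> u" using arcsK by auto
    have "col (f u) (f v) \<noteq> col (f v) (f w)"
      using P2 fV[OF h(1)] fV[OF h(2)] fV[OF h(3)] fne[OF h(1,2,4)] fne[OF h(2,3,5)] fne[OF h(3,1,6)]
      by blast
    then show "c (u, v) \<noteq> c (v, w)" unfolding c_def by simp
  qed
  have di: "distinguishing (K_V n) K_E c"
    unfolding distinguishing_def
  proof (intro allI impI)
    fix \<sigma> assume a: "digraph_aut (K_V n) K_E \<sigma> \<and> (\<forall>(u, v)\<in>sym_arcs (K_V n) K_E. c (\<sigma> u, \<sigma> v) = c (u, v))"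
    have sb: "bij_betw \<sigma> {..<n} {..<n}" using a unfolding digraph_aut_def K_V_def by simp
    have cp: "c (\<sigma> u, \<sigma> v) = c (u, v)" if "u < n" "v < n" "u \<noteq> v" for u v
    proof -
      have "(u, v) \<in> sym_arcs (K_V n) K_E" by (simp add: arcsK that)
      with a show ?thesis by auto
    qed
    define g where "g = inv_into {..<n} f"
    have g: "bij_betw g V {..<n}" unfolding g_def using bij_betw_inv_into[OF f] .
    have fg: "f (g x) = x" if "x \<in> V" for x unfolding g_def using f that by (simp add: bij_betw_inv_into_right)
    have gf: "g (f a) = a" if "a < n" for a unfolding g_def using f that by (simp add: bij_betw_inv_into_left)
    define \<tau> where "\<tau> = f \<circ> \<sigma> \<circ> g"
    have tb: "bij_betw \<tau> V V" unfolding \<tau>_def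
      using bij_betw_trans[OF bij_betw_trans[OF g sb] f] by (simp add: comp_assoc)
    have tp: "\<forall>x\<in>V. \<forall>y\<in>V. x \<noteq> y \<longrightarrow> col (\<tau> x) (\<tau> y) = col x y"
    proof (intro ballI impI)
      fix x y assume xy: "x \<in> V" "y \<in> V" "x \<noteq> y"
      have gx: "g x < n" "g y < n" using bij_betw_apply[OF g] xy by auto
      have "g x \<noteq> g y" using xy fg by metis
      then have "c (\<sigma> (g x), \<sigma> (g y)) = c (g x, g y)" using cp gx by blast
      then show "col (\<tau> x) (\<tau> y) = col x y" unfolding c_def \<tau>_def using fg xy by simp
    qed
    have tid: "\<forall>x\<in>V. \<tau> x = x" using P3 tb tp by blast
    show "\<forall>v\<in>K_V n. \<sigma> v = v"
    proof
      fix v assume "v \<in> K_V n"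
      then have v: "v < n" unfolding K_V_def by simp
      have sv: "\<sigma> v < n" using bij_betw_apply[OF sb] v by simp
      have "\<tau> (f v) = f v" using tid fV[OF v] by blast
      then have "f (\<sigma> v) = f v" unfolding \<tau>_def using gf[OF v] by simp
      then show "\<sigma> v = v" using inj sv v by (simp add: inj_on_eq_iff)
    qed
  qed
  show ?thesis using ac np di by blast
qed

lemma d12_exists:
  assumes "n \<ge> 2"
  shows "\<exists>c. arc_colouring (K_V n) K_E (n*n) c \<and> distinguishing (K_V n) K_E c
       \<and> no_mono_2path (K_V n) K_E c \<and> no_mono_2cycle (K_V n) K_E c"
proof -
  define c where "c = (\<lambda>(a::nat, b::nat). a * n + b)"
  have dv: "a = a' \<and> b = b'" if "a * n + b = a' * n + b'" "b < n" "b' < n" for a b a' b'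
  proof -
    have e1: "(a * n + b) div n = a" "(a * n + b) mod n = b" using that(2) by auto
    have e2: "(a' * n + b') div n = a'" "(a' * n + b') mod n = b'" using that(3) by auto
    have "a = a'" using e1(1) e2(1) that(1) by metis
    moreover have "b = b'" using e1(2) e2(2) that(1) by metis
    ultimately show ?thesis by simp
  qed
  have ac: "arc_colouring (K_V n) K_E (n*n) c"
    unfolding arc_colouring_def
  proof
    fix e assume "e \<in> sym_arcs (K_V n) K_E"
    then obtain a b where e: "e = (a, b)" "a < n" "b < n" using arcsK by (cases e) blast
    have "a * n + b < (a + 1) * n" using e by simp
    also have "\<dots> \<le> n * n" using e mult_le_mono1[of "a + 1" n n] by simp
    finally show "c e < n * n" unfolding c_def e by simp
  qed
  have np: "no_mono_2path (K_V n) K_E c"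
    unfolding no_mono_2path_def
  proof (intro allI impI)
    fix u v w assume "(u, v) \<in> sym_arcs (K_V n) K_E \<and> (v, w) \<in> sym_arcs (K_V n) K_E \<and> w \<noteq> u"
    then have h: "u < n" "v < n" "w < n" "u \<noteq> v" using arcsK by auto
    show "c (u, v) \<noteq> c (v, w)" unfolding c_def using dv[of u v v w] h by auto
  qed
  have nc: "no_mono_2cycle (K_V n) K_E c"
    unfolding no_mono_2cycle_def
  proof
    fix e assume "e \<in> sym_arcs (K_V n) K_E"
    then obtain a b where e: "e = (a, b)" "a < n" "b < n" "a \<noteq> b" using arcsK by (cases e) blast
    show "case e of (u, v) \<Rightarrow> c (u, v) \<noteq> c (v, u)" unfolding c_def e using dv[of a b b a] e by auto
  qed
  have di: "distinguishing (K_V n) K_E c"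
    unfolding distinguishing_def
  proof (intro allI impI)
    fix \<sigma> assume a: "digraph_aut (K_V n) K_E \<sigma> \<and> (\<forall>(u, v)\<in>sym_arcs (K_V n) K_E. c (\<sigma> u, \<sigma> v) = c (u, v))"
    have sb: "bij_betw \<sigma> {..<n} {..<n}" using a unfolding digraph_aut_def K_V_def by simp
    show "\<forall>v\<in>K_V n. \<sigma> v = v"
    proof
      fix v assume "v \<in> K_V n"
      then have v: "v < n" unfolding K_V_def by simp
      define w :: nat where "w = (if v = 0 then 1 else 0)"
      have w: "w < n" "v \<noteq> w" unfolding w_def using assms v by auto
      have "(v, w) \<in> sym_arcs (K_V n) K_E" by (simp add: arcsK v w)
      with a have "c (\<sigma> v, \<sigma> w) = c (v, w)" by auto
      moreover have "\<sigma> w < n" using bij_betw_apply[OF sb] w by simp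
      ultimately show "\<sigma> v = v" unfolding c_def using dv[of "\<sigma> v" "\<sigma> w" v w] w by simp
    qed
  qed
  show ?thesis using ac np nc di by blast
qed

lemma d12_lower:
  assumes n: "n = ((2 * l + 1) choose l) + 1"
    and ac: "arc_colouring (K_V n) K_E k c"
    and np: "no_mono_2path (K_V n) K_E c"
    and nc: "no_mono_2cycle (K_V n) K_E c"
  shows "2 * l + 2 \<le> k"
proof (rule ccontr)
  assume "\<not> 2 * l + 2 \<le> k"
  then have k: "k \<le> 2 * l + 1" by simp
  define S where "S v = {i. \<exists>w<n. w \<noteq> v \<and> c (v, w) = i}" for v
  have cl: "c (u, v) < k" if "u < n" "v < n" "u \<noteq> v" for u v
  proof -
    have "(u, v) \<in> sym_arcs (K_V n) K_E" by (simp add: arcsK that)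
    with ac show ?thesis unfolding arc_colouring_def by blast
  qed
  have sub: "S v \<subseteq> {..<2*l+1}" if v: "v < n" for v
  proof
    fix i assume "i \<in> S v"
    then obtain w where "w < n" "w \<noteq> v" "c (v, w) = i" unfolding S_def by blast
    then show "i \<in> {..<2*l+1}" using cl[of v w] v k by auto
  qed
  have key: "\<not> S u \<subseteq> S v" if "u < n" "v < n" "u \<noteq> v" for u v
  proof
    assume s: "S u \<subseteq> S v"
    have "c (u, v) \<in> S u" unfolding S_def using that by blast
    then have "c (u, v) \<in> S v" using s by blast
    then obtain w where w: "w < n" "w \<noteq> v" "c (v, w) = c (u, v)" unfolding S_def by blast
    show False
    proof (cases "w = u")
      case True
      have "(u, v) \<in> sym_arcs (K_V n) K_E" by (simp add: arcsK that)
      with nc have "c (u, v) \<noteq> c (v, u)" unfolding no_mono_2cycle_def by auto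
      then show False using True w by simp
    next
      case False
      have "v \<noteq> w" using w(2) by simp
      then have "(u, v) \<in> sym_arcs (K_V n) K_E" "(v, w) \<in> sym_arcs (K_V n) K_E" by (simp_all add: arcsK that w)
      with np False have "c (u, v) \<noteq> c (v, w)" unfolding no_mono_2path_def by blast
      then show False using w by simp
    qed
  qed
  have inj: "inj_on S {..<n}"
    unfolding inj_on_def using key by blast
  define F where "F = S ` {..<n}"
  have cF: "card F = n" unfolding F_def using card_image[OF inj] by simp
  have FP: "F \<subseteq> Pow {..<2*l+1}" unfolding F_def using sub by blast
  have FA: "\<forall>A\<in>F. \<forall>B\<in>F. A \<subseteq> B \<longrightarrow> A = B" unfolding F_def using key by blast
  have "card F \<le> card {..<2*l+1} choose (card {..<2*l+1} div 2)"
    using sperner[OF _ FP FA] by simp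
  also have "\<dots> = (2*l+1) choose l" by simp
  finally show False using cF n by simp
qed



lemma card_Ls: "card (Ls l) = (2*l) choose l"
proof -
  have "Ls l = {B. B \<subseteq> {..<2*l} \<and> card B = l}" unfolding Ls_def by simp
  then show ?thesis using n_subsets[of "{..<2*l}" l] by simp
qed

lemma fin_Ls: "finite (Ls l)"
proof -
  have "Ls l \<subseteq> Pow {..<2*l}" unfolding Ls_def by auto
  then show ?thesis using finite_subset by blast
qed

lemma card_Vt:
  assumes "D \<subseteq> Ls l"
  shows "finite (Vt l D) \<and> card (Vt l D) = card (Ls l) + (card (Ls l) - card D)"
proof -
  have e: "Vt l D = (Ls l \<times> {False}) \<union> ((Ls l - D) \<times> {True})" unfolding Vt_def by auto
  have f1: "finite (Ls l \<times> {False})" using fin_Ls by simp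
  have f2: "finite ((Ls l - D) \<times> {True})" using fin_Ls by simp
  have dj: "(Ls l \<times> {False}) \<inter> ((Ls l - D) \<times> {True}) = {}" by auto
  have "card (Vt l D) = card (Ls l \<times> {False}) + card ((Ls l - D) \<times> {True})"
    unfolding e using card_Un_disjoint[OF f1 f2 dj] .
  also have "\<dots> = card (Ls l) + card (Ls l - D)" by (simp add: card_cartesian_product)
  also have "card (Ls l - D) = card (Ls l) - card D"
    using assms fin_Ls finite_subset card_Diff_subset by metis
  finally show ?thesis using e f1 f2 by simp
qed

theorem proposition4p5:
  fixes l n :: nat
  assumes "l \<ge> 2"
    and "n = ((2 * l + 1) choose l) + 1"
  shows "chi_D2 (K_V n) K_E < chi_D12 (K_V n) K_E"
proof -
  have l: "l \<ge> 2" using assms(1) .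
  define Cb where "Cb = (2*l) choose l"
  define C' where "C' = (2*l) choose (l - 1)"
  have "(2 * l + 1) choose l = Suc (2*l) choose Suc (l - 1)" using l by simp
  also have "\<dots> = C' + Cb" unfolding C'_def Cb_def
    using binomial_Suc_Suc[of "2*l" "l-1"] l by (simp del: binomial_Suc_Suc)
  finally have n: "n = C' + Cb + 1" using assms(2) by simp
  have "C' < Cb" unfolding C'_def Cb_def using binomial_strict_mono[of "l - 1" l "2*l"] l by simp
  then have n2: "n \<le> 2 * Cb" using n by simp
  define d where "d = 2 * Cb - n"
  have dle: "d \<le> card (Ls l)" unfolding d_def card_Ls Cb_def[symmetric] using n by simp
  obtain D where D: "D \<subseteq> Ls l" "card D = d"
    using obtain_subset_with_card_n[OF dle] by metis
  have cv: "finite (Vt l D)" "card (Vt l D) = n"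
    using card_Vt[OF D(1)] D(2) n2 n unfolding card_Ls Cb_def[symmetric] d_def by auto
  have P1: "\<forall>x\<in>Vt l D. \<forall>y\<in>Vt l D. x \<noteq> y \<longrightarrow> col l x y < 2*l+1"
    using col_lt l by blast
  have P2: "\<forall>x\<in>Vt l D. \<forall>y\<in>Vt l D. \<forall>z\<in>Vt l D. x \<noteq> y \<and> y \<noteq> z \<and> z \<noteq> x \<longrightarrow> col l x y \<noteq> col l y z"
    using col_path l by blast
  have P3: "\<forall>\<tau>. bij_betw \<tau> (Vt l D) (Vt l D) \<and> (\<forall>x\<in>Vt l D. \<forall>y\<in>Vt l D. x \<noteq> y \<longrightarrow> col l (\<tau> x) (\<tau> y) = col l x y)
               \<longrightarrow> (\<forall>x\<in>Vt l D. \<tau> x = x)"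
    using distinguish_Vt l by blast
  have ex2: "\<exists>c. arc_colouring (K_V n) K_E (2*l+1) c \<and> distinguishing (K_V n) K_E c \<and> no_mono_2path (K_V n) K_E c"
    using transfer[OF cv(1) cv(2) P1 P2 P3] .
  have up: "chi_D2 (K_V n) K_E \<le> 2*l+1"
    unfolding chi_D2_def using ex2 by (rule Least_le)
  have "n \<ge> 2" using n \<open>C' < Cb\<close> by simp
  then have ex12: "\<exists>k c. arc_colouring (K_V n) K_E k c \<and> distinguishing (K_V n) K_E c
       \<and> no_mono_2path (K_V n) K_E c \<and> no_mono_2cycle (K_V n) K_E c"
    using d12_exists by blast
  have "\<exists>c. arc_colouring (K_V n) K_E (chi_D12 (K_V n) K_E) c \<and> distinguishing (K_V n) K_E c
       \<and> no_mono_2path (K_V n) K_E c \<and> no_mono_2cycle (K_V n) K_E c"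
    unfolding chi_D12_def using ex12 by (rule LeastI_ex)
  then have lo: "2*l+2 \<le> chi_D12 (K_V n) K_E"
    using d12_lower[OF assms(2)] by blast
  show ?thesis using up lo by simp
qed


end
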